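(* Consider the inexact value iteration $\hat P_{i+1}=\mathcal R(\hat P_i,S)+\Delta_i$, $i\in\mathbb Z_+$, with $\hat P_0\in\mathbb S^n_+$ and disturbances $\Delta_i\in\mathbb S^n$, and let $\|\Delta\|_\infty=\sup_{i\in\mathbb Z_+}\|\Delta_i\|_2$. There exist a $\mathcal{KL}$-function $\beta$ and a $\mathcal K$-function $\gamma$ such that for every disturbance sequence with $\|\Delta\|_\infty<\lambda_{\min}(S)$, every $\hat P_0\in\mathbb S^n_+$ and every $i\in\mathbb Z_+$, $$\|\hat P_i-P^*\|_2\le\beta(\|\hat P_0-P^*\|_2,i)+\gamma(\|\Delta\|_\infty).$$
   Context: Let $n,m\ge 1$, $A\in\mathbb R^{n\times n}$, $B\in\mathbb R^{n\times m}$, $S\in\mathbb S^n_{++}$, $R\in\mathbb S^m_{++}$, with $(A,B)$ stabilizable. Here $\mathbb S^n$, $\mathbb S^n_+$, $\mathbb S^n_{++}$ denote the real symmetric, symmetric positive semidefinite, and symmetric positive definite $n\times n$ matrices; $\|\cdot\|_2$ is the spectral norm; $\lambda_{\min}$ is the smallest eigenvalue. For $P\in\mathbb S^n_+$ and $S'\in\mathbb S^n$, the Riccati operator is $\mathcal R(P,S')=A^\top PA-A^\top PB(R+B^\top PB)^{-1}B^\top PA+S'$. $P^*\in\mathbb S^n_{++}$ denotes the unique positive definite solution of $P=\mathcal R(P,S)$. A function $\gamma:\mathbb R_+\to\mathbb R_+$ is of class $\mathcal K$ if it is continuous, strictly increasing and $\gamma(0)=0$. A function $\beta:\mathbb R_+\times\mathbb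 Z_+\to\mathbb R_+$ is of class $\mathcal{KL}$ if $\beta(\cdot,i)$ is of class $\mathcal K$ for each fixed $i$, and $\beta(r,i)$ decreases to $0$ as $i\to\infty$ for each fixed $r\ge 0$. *)

theory Defs
  imports "HOL-Analysis.Analysis"
begin

definition symm_mat :: "real^'n^'n \<Rightarrow> bool" where
  "symm_mat M \<longleftrightarrow> transpose M = M"

definition psd_mat :: "real^'n^'n \<Rightarrow> bool" where
  "psd_mat M \<longleftrightarrow> symm_mat M \<and> (\<forall>x. 0 \<le> x \<bullet> (M *v x))"

definition pd_mat :: "real^'n^'n \<Rightarrow> bool" where
  "pd_mat M \<longleftrightarrow> symm_mat M \<and> (\<forall>x. x \<noteq> 0 \<longrightarrow> 0 < x \<bullet> (M *v x))"

definition spec_norm :: "real^'n^'m \<Rightarrow> real" where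
  "spec_norm M = onorm (\<lambda>x. M *v x)"

definition lambda_min :: "real^'n^'n \<Rightarrow> real" where
  "lambda_min M = Min {l. \<exists>v. v \<noteq> 0 \<and> M *v v = l *\<^sub>R v}"

definition cmat :: "real^'n^'m \<Rightarrow> complex^'n^'m" where
  "cmat M = (\<chi> i j. complex_of_real (M $ i $ j))"

definition schur_stable :: "real^'n^'n \<Rightarrow> bool" where
  "schur_stable M \<longleftrightarrow>
     (\<forall>(l::complex) v. v \<noteq> 0 \<and> cmat M *v v = l *s v \<longrightarrow> cmod l < 1)"

definition stabilizable :: "real^'n^'n \<Rightarrow> real^'m^'n \<Rightarrow> bool" where
  "stabilizable A B \<longleftrightarrow> (\<exists>K :: real^'n^'m. schur_stable (A + B ** K))"

definition riccati ::
  "real^'n^'n \<Rightarrow> real^'m^'n \<Rightarrow> real^'m^'m \<Rightarrow> real^'n^'n \<Rightarrow> real^'n^'n \<Rightarrow> real^'n^'n" where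
  "riccati A B R P S' =
     transpose A ** P ** A
     - transpose A ** P ** B ** matrix_inv (R + transpose B ** P ** B) ** transpose B ** P ** A
     + S'"

definition class_K :: "(real \<Rightarrow> real) \<Rightarrow> bool" where
  "class_K g \<longleftrightarrow> continuous_on {0..} g \<and> strict_mono_on {0..} g \<and> g 0 = 0
                 \<and> (\<forall>r\<ge>0. 0 \<le> g r)"

definition class_KL :: "(real \<Rightarrow> nat \<Rightarrow> real) \<Rightarrow> bool" where
  "class_KL b \<longleftrightarrow> (\<forall>i. class_K (\<lambda>r. b r i))
                  \<and> (\<forall>r\<ge>0. antimono (\<lambda>i. b r i) \<and> (\<lambda>i. b r i) \<longlonglongrightarrow> 0)"

end

theory Submission
  imports Defs
begin

lemma inner_mv_transpose: "(x::real^'n) \<bullet> (M *v y) = (transpose M *v x) \<bullet> y"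
  by (simp add: dot_lmul_matrix[symmetric])

lemma symm_inner: "symm_mat M \<Longrightarrow> (x::real^'n) \<bullet> (M *v y) = y \<bullet> (M *v x)"
  by (metis inner_commute inner_mv_transpose symm_mat_def)

lemma transpose_add: "transpose (A + B) = transpose A + transpose (B::real^'n^'m)"
  by (simp add: transpose_def vec_eq_iff)

lemma transpose_diff: "transpose (A - B) = transpose A - transpose (B::real^'n^'m)"
  by (simp add: transpose_def vec_eq_iff)

lemma matrix_inv_props:
  assumes "invertible (G::real^'n^'n)"
  shows "G ** matrix_inv G = mat 1" "matrix_inv G ** G = mat 1"
  using someI_ex[OF assms[unfolded invertible_def]] unfolding matrix_inv_def by auto

lemma matrix_inv_symm:
  assumes "invertible (G::real^'n^'n)" "symm_mat G"
  shows "symm_mat (matrix_inv G)"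
proof -
  let ?H = "matrix_inv G"
  have 1: "G ** ?H = mat 1" "?H ** G = mat 1" using matrix_inv_props[OF assms(1)] by auto
  have "transpose ?H ** G = mat 1"
    using arg_cong[OF 1(1), of transpose] assms(2) by (simp add: matrix_transpose_mul symm_mat_def)
  have "transpose ?H = transpose ?H ** (G ** ?H)" using 1 by simp
  also have "\<dots> = (transpose ?H ** G) ** ?H" by (simp add: matrix_mul_assoc)
  also have "\<dots> = ?H" using \<open>transpose ?H ** G = mat 1\<close> by simp
  finally show ?thesis unfolding symm_mat_def .
qed

lemma G_pos:
  fixes P :: "real^'n^'n" and B :: "real^'m^'n" and R :: "real^'m^'m"
  shows "u \<bullet> ((R + transpose B ** P ** B) *v u) = u \<bullet> (R *v u) + (B *v u) \<bullet> (P *v (B *v u))"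
  by (simp add: matrix_vector_mult_add_rdistrib matrix_vector_mul_assoc[symmetric] inner_add_right
       dot_lmul_matrix inner_commute[of u] inner_commute[of "P *v (B *v u)"])

lemma G_invertible:
  fixes P :: "real^'n^'n" and B :: "real^'m^'n" and R :: "real^'m^'m"
  assumes "pd_mat R" "psd_mat P"
  shows "invertible (R + transpose B ** P ** B)"
proof -
  let ?G = "R + transpose B ** P ** B"
  have "\<forall>x. ?G *v x = 0 \<longrightarrow> x = 0"
  proof (intro allI impI)
    fix x assume "?G *v x = 0"
    hence "x \<bullet> (?G *v x) = 0" by simp
    hence "x \<bullet> (R *v x) + (B *v x) \<bullet> (P *v (B *v x)) = 0" by (simp add: G_pos)
    moreover have "0 \<le> (B *v x) \<bullet> (P *v (B *v x))" using assms(2) by (simp add: psd_mat_def)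
    ultimately have "x \<bullet> (R *v x) \<le> 0" by linarith
    then show "x = 0" using assms(1) unfolding pd_mat_def by force
  qed
  then show ?thesis using matrix_left_invertible_ker invertible_left_inverse by blast
qed

lemma G_symm:
  fixes P :: "real^'n^'n" and B :: "real^'m^'n" and R :: "real^'m^'m"
  assumes "symm_mat R" "symm_mat P"
  shows "symm_mat (R + transpose B ** P ** B)"
  using assms by (simp add: symm_mat_def transpose_add matrix_transpose_mul matrix_mul_assoc)

lemma riccati_symm:
  fixes P :: "real^'n^'n" and B :: "real^'m^'n" and R :: "real^'m^'m"
  assumes "pd_mat R" "psd_mat P" "symm_mat S'"
  shows "symm_mat (riccati A B R P S')"
proof -
  have sR: "symm_mat R" and sP: "symm_mat P" using assms by (auto simp: pd_mat_def psd_mat_def)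
  have "symm_mat (matrix_inv (R + transpose B ** P ** B))"
    by (rule matrix_inv_symm[OF G_invertible[OF assms(1,2)] G_symm[OF sR sP]])
  then show ?thesis using sP assms(3)
    by (simp add: riccati_def symm_mat_def transpose_add transpose_diff matrix_transpose_mul matrix_mul_assoc)
qed

lemma cross_term:
  fixes A :: "real^'n^'n" and B :: "real^'m^'n" and P :: "real^'n^'n"
  assumes "symm_mat P"
  shows "a \<bullet> (P *v (B *v w)) = (transpose B *v (P *v a)) \<bullet> w"
proof -
  have "a \<bullet> (P *v (B *v w)) = (B *v w) \<bullet> (P *v a)" using symm_inner[OF assms] by blast
  also have "\<dots> = w \<bullet> (transpose B *v (P *v a))" by (metis dot_lmul_matrix inner_commute transpose_matrix_vector)
  finally show ?thesis by (simp add: inner_commute)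
qed

lemma riccati_identity:
  fixes A :: "real^'n^'n" and B :: "real^'m^'n" and R :: "real^'m^'m" and P S' :: "real^'n^'n" and x :: "real^'n" and u :: "real^'m"
  assumes R: "pd_mat R" and P: "psd_mat P"
  defines "G \<equiv> R + transpose B ** P ** B"
  defines "g \<equiv> transpose B *v (P *v (A *v x))"
  defines "us \<equiv> - (matrix_inv G *v g)"
  shows "x \<bullet> (riccati A B R P S' *v x) + (u - us) \<bullet> (G *v (u - us))
       = (A *v x + B *v u) \<bullet> (P *v (A *v x + B *v u)) + u \<bullet> (R *v u) + x \<bullet> (S' *v x)"
proof -
  define a where "a = A *v x"
  define w where "w = matrix_inv G *v g"
  have sR: "symm_mat R" and sP: "symm_mat P" using R P by (auto simp: pd_mat_def psd_mat_def)
  have sG: "symm_mat G" unfolding G_def by (rule G_symm[OF sR sP])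
  have inv: "invertible G" unfolding G_def by (rule G_invertible[OF R P])
  have h1: "riccati A B R P S' *v x = transpose A *v (P *v a) - transpose A *v (P *v (B *v w)) + S' *v x"
    by (simp add: riccati_def matrix_vector_mult_add_rdistrib matrix_vector_mult_diff_rdistrib
        matrix_vector_mul_assoc[symmetric] g_def G_def a_def w_def)
  have h2: "\<And>y. x \<bullet> (y v* A) = a \<bullet> y"
    unfolding a_def by (metis dot_lmul_matrix inner_commute transpose_matrix_vector)
  have h3: "\<And>v. a \<bullet> (P *v (B *v v)) = g \<bullet> v"
    using cross_term[OF sP] by (simp add: g_def a_def)
  have xr: "x \<bullet> (riccati A B R P S' *v x) = a \<bullet> (P *v a) - g \<bullet> w + x \<bullet> (S' *v x)"
    by (simp add: h1 inner_add_right inner_diff_right h2 h3)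
  have h4: "G *v w = g"
    using matrix_inv_props(1)[OF inv] by (simp add: w_def matrix_vector_mul_assoc)
  have uw: "u - us = u + w" by (simp add: us_def w_def)
  have h5: "(u - us) \<bullet> (G *v (u - us)) = u \<bullet> (G *v u) + 2 * (u \<bullet> g) + w \<bullet> g"
    using symm_inner[OF sG, of w u]
    by (simp add: uw matrix_vector_right_distrib inner_add_left inner_add_right h4)
  have h6: "u \<bullet> (G *v u) = u \<bullet> (R *v u) + (B *v u) \<bullet> (P *v (B *v u))"
    unfolding G_def by (rule G_pos)
  have h7: "(a + B *v u) \<bullet> (P *v (a + B *v u)) = a \<bullet> (P *v a) + 2 * (u \<bullet> g) + (B *v u) \<bullet> (P *v (B *v u))"
    using symm_inner[OF sP, of "B *v u" a] h3[of u]
    by (simp add: matrix_vector_right_distrib inner_add_left inner_add_right inner_commute)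
  show ?thesis
    using xr h5 h6 h7 by (simp add: a_def inner_commute[of w g])
qed

definition phi :: "real^'n^'n \<Rightarrow> real^'m^'n \<Rightarrow> real^'m^'m \<Rightarrow> real^'n^'n \<Rightarrow> real^'n^'n \<Rightarrow> real^'n \<Rightarrow> real^'m \<Rightarrow> real"
  where "phi A B R P S' x u = (A *v x + B *v u) \<bullet> (P *v (A *v x + B *v u)) + u \<bullet> (R *v u) + x \<bullet> (S' *v x)"

lemma riccati_le_phi:
  fixes A :: "real^'n^'n" and B :: "real^'m^'n" and R :: "real^'m^'m" and P S' :: "real^'n^'n"
  assumes R: "pd_mat R" and P: "psd_mat P"
  shows "x \<bullet> (riccati A B R P S' *v x) \<le> phi A B R P S' x u"
proof -
  let ?G = "R + transpose B ** P ** B"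
  let ?us = "- (matrix_inv ?G *v (transpose B *v (P *v (A *v x))))"
  have "0 \<le> (u - ?us) \<bullet> (?G *v (u - ?us))"
    unfolding G_pos using R P unfolding pd_mat_def psd_mat_def
    by (metis add_nonneg_nonneg eq_iff inner_zero_left less_eq_real_def)
  then show ?thesis using riccati_identity[OF R P, where A=A and B=B and x=x and S'=S' and u=u] unfolding phi_def by linarith
qed

lemma riccati_eq_phi:
  fixes A :: "real^'n^'n" and B :: "real^'m^'n" and R :: "real^'m^'m" and P S' :: "real^'n^'n"
  assumes R: "pd_mat R" and P: "psd_mat P"
  shows "\<exists>u. x \<bullet> (riccati A B R P S' *v x) = phi A B R P S' x u"
proof -
  let ?G = "R + transpose B ** P ** B"
  let ?us = "- (matrix_inv ?G *v (transpose B *v (P *v (A *v x))))"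
  have "x \<bullet> (riccati A B R P S' *v x) = phi A B R P S' x ?us"
    using riccati_identity[OF R P, where A=A and B=B and x=x and S'=S' and u="?us"] unfolding phi_def
    by (simp only: diff_self inner_zero_left mult_zero_right matrix_vector_mult_0_right add_0_right)
  then show ?thesis by blast
qed

lemma riccati_lower:
  fixes A :: "real^'n^'n" and B :: "real^'m^'n" and R :: "real^'m^'m" and P Ps S :: "real^'n^'n"
  assumes R: "pd_mat R" and P: "psd_mat P" and Ps: "psd_mat Ps"
    and fx: "\<And>y. y \<bullet> (Ps *v y) = y \<bullet> (riccati A B R Ps S *v y)"
    and c: "0 \<le> c" "c \<le> 1" and le: "\<And>y. c * (y \<bullet> (Ps *v y)) \<le> y \<bullet> (P *v y)"
  shows "c * (x \<bullet> (Ps *v x)) + (1 - c) * (x \<bullet> (S *v x)) \<le> x \<bullet> (riccati A B R P S *v x)"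
proof -
  obtain u where u: "x \<bullet> (riccati A B R P S *v x) = phi A B R P S x u"
    using riccati_eq_phi[OF R P] by blast
  define z where "z = A *v x + B *v u"
  have uR: "0 \<le> u \<bullet> (R *v u)" using R unfolding pd_mat_def by (cases "u = 0") (auto intro: less_imp_le)
  have 1: "x \<bullet> (Ps *v x) \<le> z \<bullet> (Ps *v z) + u \<bullet> (R *v u) + x \<bullet> (S *v x)"
    using fx[of x] riccati_le_phi[OF R Ps, where A=A and B=B and x=x and S'=S and u=u] unfolding phi_def z_def by linarith
  have 2: "c * (x \<bullet> (Ps *v x)) \<le> c * (z \<bullet> (Ps *v z)) + c * (u \<bullet> (R *v u)) + c * (x \<bullet> (S *v x))"
    using mult_left_mono[OF 1 c(1)] by (simp add: distrib_left)
  have 3: "0 \<le> (1 - c) * (u \<bullet> (R *v u))" using c uR by simp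
  have "x \<bullet> (riccati A B R P S *v x) = z \<bullet> (P *v z) + u \<bullet> (R *v u) + x \<bullet> (S *v x)"
    using u unfolding phi_def z_def by simp
  then show ?thesis using le[of z] 2 3 by (simp add: algebra_simps)
qed

lemma riccati_upper:
  fixes A :: "real^'n^'n" and B :: "real^'m^'n" and R :: "real^'m^'m" and P Ps S :: "real^'n^'n"
  assumes R: "pd_mat R" and P: "psd_mat P" and Ps: "psd_mat Ps"
    and fx: "\<And>y. y \<bullet> (Ps *v y) = y \<bullet> (riccati A B R Ps S *v y)"
    and t: "0 \<le> t" and le: "\<And>y. y \<bullet> (P *v y) \<le> (1 + t) * (y \<bullet> (Ps *v y))"
  shows "x \<bullet> (riccati A B R P S *v x) \<le> (1 + t) * (x \<bullet> (Ps *v x)) - t * (x \<bullet> (S *v x))"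
proof -
  obtain u where u: "x \<bullet> (riccati A B R Ps S *v x) = phi A B R Ps S x u"
    using riccati_eq_phi[OF R Ps] by blast
  define z where "z = A *v x + B *v u"
  have uR: "0 \<le> u \<bullet> (R *v u)" using R unfolding pd_mat_def by (cases "u = 0") (auto intro: less_imp_le)
  have 1: "x \<bullet> (Ps *v x) = z \<bullet> (Ps *v z) + u \<bullet> (R *v u) + x \<bullet> (S *v x)"
    using fx[of x] u unfolding phi_def z_def by simp
  have 2: "x \<bullet> (riccati A B R P S *v x) \<le> z \<bullet> (P *v z) + u \<bullet> (R *v u) + x \<bullet> (S *v x)"
    using riccati_le_phi[OF R P, where A=A and B=B and x=x and S'=S and u=u] unfolding phi_def z_def by simp
  have 3: "0 \<le> t * (u \<bullet> (R *v u))" using t uR by simp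
  show ?thesis using 1 2 3 le[of z] by (simp add: algebra_simps)
qed


lemma psd_zero_form:
  fixes N :: "real^'n^'n"
  assumes sN: "symm_mat N" and pos: "\<And>y. 0 \<le> y \<bullet> (N *v y)" and z: "v \<bullet> (N *v v) = 0"
  shows "N *v v = 0"
proof -
  define w where "w = N *v v"
  define c where "c = w \<bullet> w"
  define k where "k = w \<bullet> (N *v w)"
  have k0: "0 \<le> k" using pos unfolding k_def by simp
  have expand: "(v + t *\<^sub>R w) \<bullet> (N *v (v + t *\<^sub>R w)) = 2 * t * c + t^2 * k" for t
  proof -
    have "v \<bullet> (N *v w) = w \<bullet> (N *v v)" using symm_inner[OF sN] by blast
    then show ?thesis
      by (simp add: matrix_vector_right_distrib matrix_vector_mult_scaleR inner_add_left inner_add_right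
          z c_def k_def w_def power2_eq_square algebra_simps)
  qed
  define t where "t = - c / (k + 1)"
  have "0 \<le> 2 * t * c + t^2 * k" using pos[of "v + t *\<^sub>R w"] expand by simp
  hence "0 \<le> (2 * t * c + t^2 * k) * (k+1)^2" using k0 by simp
  also have "(2 * t * c + t^2 * k) * (k+1)^2 = 2 * c * (t * (k+1)) * (k+1) + k * (t * (k+1))^2"
    by (simp add: power2_eq_square algebra_simps)
  also have "t * (k+1) = - c" using k0 unfolding t_def by simp
  also have "2 * c * (- c) * (k+1) + k * (- c)^2 = - (c^2 * (k + 2))"
    by (simp add: power2_eq_square algebra_simps)
  finally have "c^2 * (k + 2) \<le> 0" by simp
  moreover have "0 \<le> c^2 * (k+2)" using k0 by simp
  ultimately have "c^2 * (k+2) = 0" by linarith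
  hence "c = 0" using k0 by simp
  then show ?thesis unfolding c_def w_def by simp
qed

lemma rayleigh_min:
  fixes M :: "real^'n^'n"
  assumes sM: "symm_mat M"
  shows "\<exists>m v. v \<noteq> 0 \<and> M *v v = m *\<^sub>R v \<and> (\<forall>x. m * (x \<bullet> x) \<le> x \<bullet> (M *v x))"
proof -
  let ?f = "\<lambda>x::real^'n. x \<bullet> (M *v x)"
  have cont: "continuous_on (sphere 0 1) ?f"
    by (intro continuous_intros linear_continuous_on matrix_vector_mul_bounded_linear)
  have ne: "sphere (0::real^'n) 1 \<noteq> {}" by (simp add: sphere_eq_empty)
  obtain v where v: "v \<in> sphere 0 1" and vmin: "\<And>y. y \<in> sphere 0 1 \<Longrightarrow> ?f v \<le> ?f y"
    using continuous_attains_inf[OF compact_sphere ne cont] by blast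
  define m where "m = ?f v"
  have nv: "norm v = 1" using v by simp
  have bound: "m * (x \<bullet> x) \<le> x \<bullet> (M *v x)" for x
  proof (cases "x = 0")
    case True then show ?thesis by simp
  next
    case False
    define y where "y = (1 / norm x) *\<^sub>R x"
    have "y \<in> sphere 0 1" using False by (simp add: y_def)
    hence "m \<le> ?f y" using vmin unfolding m_def by blast
    also have "?f y = ?f x / (norm x)^2"
      by (simp add: y_def matrix_vector_mult_scaleR power2_eq_square)
    finally have "m * (norm x)^2 \<le> ?f x" using False by (simp add: field_simps)
    then show ?thesis by (simp add: power2_norm_eq_inner)
  qed
  define N where "N = M - m *\<^sub>R mat 1"
  have Nv: "N *v y = M *v y - m *\<^sub>R y" for y
    by (simp add: N_def matrix_vector_mult_diff_rdistrib scaleR_matrix_vector_assoc[symmetric])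
  have sN: "symm_mat N" using sM by (simp add: N_def symm_mat_def transpose_diff transpose_scalar)
  have pos: "0 \<le> y \<bullet> (N *v y)" for y using bound[of y] by (simp add: Nv inner_diff_right)
  have z: "v \<bullet> (N *v v) = 0" using nv by (simp add: Nv inner_diff_right m_def power2_norm_eq_inner[symmetric])
  have "N *v v = 0" by (rule psd_zero_form[OF sN pos z])
  hence "M *v v = m *\<^sub>R v" by (simp add: Nv)
  moreover have "v \<noteq> 0" using nv by auto
  ultimately show ?thesis using bound by blast
qed

lemma eigen_finite:
  fixes M :: "real^'n^'n"
  assumes sM: "symm_mat M"
  shows "finite {l. \<exists>v. v \<noteq> 0 \<and> M *v v = l *\<^sub>R v}"
proof -
  let ?E = "{l. \<exists>v. v \<noteq> 0 \<and> M *v v = l *\<^sub>R v}"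
  define f where "f l = (SOME v. v \<noteq> 0 \<and> M *v v = l *\<^sub>R v)" for l
  have fP: "f l \<noteq> 0 \<and> M *v f l = l *\<^sub>R f l" if "l \<in> ?E" for l
    using someI_ex[of "\<lambda>v. v \<noteq> 0 \<and> M *v v = l *\<^sub>R v"] that unfolding f_def by auto
  have orth: "f l1 \<bullet> f l2 = 0" if "l1 \<in> ?E" "l2 \<in> ?E" "l1 \<noteq> l2" for l1 l2
  proof -
    have "l1 * (f l1 \<bullet> f l2) = (M *v f l1) \<bullet> f l2" using fP[OF that(1)] by simp
    also have "\<dots> = f l2 \<bullet> (M *v f l1)" by (simp add: inner_commute)
    also have "\<dots> = f l1 \<bullet> (M *v f l2)" using symm_inner[OF sM] by blast
    also have "\<dots> = l2 * (f l1 \<bullet> f l2)" using fP[OF that(2)] by simp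
    finally show ?thesis using that(3) by simp
  qed
  have inj: "inj_on f ?E"
  proof (rule inj_onI)
    fix l1 l2 assume a: "l1 \<in> ?E" "l2 \<in> ?E" "f l1 = f l2"
    have "l1 *\<^sub>R f l1 = l2 *\<^sub>R f l1" using fP[OF a(1)] fP[OF a(2)] a(3) by metis
    then show "l1 = l2" using fP[OF a(1)] by simp
  qed
  have "pairwise orthogonal (f ` ?E)"
    unfolding pairwise_def
  proof (intro ballI impI)
    fix x y assume "x \<in> f ` ?E" "y \<in> f ` ?E" "x \<noteq> y"
    then obtain l1 l2 where l: "l1 \<in> ?E" "l2 \<in> ?E" "x = f l1" "y = f l2" by blast
    with \<open>x \<noteq> y\<close> have "l1 \<noteq> l2" by blast
    then show "orthogonal x y" unfolding orthogonal_def using orth[OF l(1,2)] l(3,4) by simp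
  qed
  moreover have "0 \<notin> f ` ?E"
  proof
    assume "0 \<in> f ` ?E"
    then obtain l where "l \<in> ?E" "0 = f l" by blast
    then show False using fP[of l] by simp
  qed
  ultimately have "independent (f ` ?E)" by (rule pairwise_orthogonal_independent)
  hence "finite (f ` ?E)" by (rule finiteI_independent)
  then show ?thesis using finite_imageD inj by blast
qed

lemma lambda_min_bound:
  fixes M :: "real^'n^'n"
  assumes sM: "symm_mat M"
  shows "lambda_min M * (x \<bullet> x) \<le> x \<bullet> (M *v x)"
    and "\<exists>v. v \<noteq> 0 \<and> M *v v = lambda_min M *\<^sub>R v"
proof -
  obtain m v where v: "v \<noteq> 0" "M *v v = m *\<^sub>R v" and b: "\<And>x. m * (x \<bullet> x) \<le> x \<bullet> (M *v x)"
    using rayleigh_min[OF sM] by blast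
  have "lambda_min M = m"
    unfolding lambda_min_def
  proof (rule Min_eqI[OF eigen_finite[OF sM]])
    fix y assume "y \<in> {l. \<exists>v. v \<noteq> 0 \<and> M *v v = l *\<^sub>R v}"
    then obtain w where w: "w \<noteq> 0" "M *v w = y *\<^sub>R w" by blast
    have "m * (w \<bullet> w) \<le> y * (w \<bullet> w)" using b[of w] w by simp
    moreover have "0 < w \<bullet> w" using w by simp
    ultimately show "m \<le> y" by simp
  next
    show "m \<in> {l. \<exists>v. v \<noteq> 0 \<and> M *v v = l *\<^sub>R v}" using v by blast
  qed
  then show "lambda_min M * (x \<bullet> x) \<le> x \<bullet> (M *v x)" "\<exists>v. v \<noteq> 0 \<and> M *v v = lambda_min M *\<^sub>R v"
    using b v by auto
qed

lemma lambda_min_pos: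
  fixes M :: "real^'n^'n"
  assumes "pd_mat M"
  shows "0 < lambda_min M"
proof -
  have sM: "symm_mat M" using assms by (simp add: pd_mat_def)
  obtain v where v: "v \<noteq> 0" "M *v v = lambda_min M *\<^sub>R v" using lambda_min_bound(2)[OF sM] by blast
  have "0 < v \<bullet> (M *v v)" using assms v(1) by (simp add: pd_mat_def)
  hence "0 < lambda_min M * (v \<bullet> v)" using v(2) by simp
  moreover have "0 < v \<bullet> v" using v by simp
  ultimately show ?thesis by (simp add: zero_less_mult_iff)
qed

lemma qf_bound:
  fixes M :: "real^'n^'n"
  shows "\<bar>x \<bullet> (M *v x)\<bar> \<le> spec_norm M * (x \<bullet> x)"
proof -
  have "\<bar>x \<bullet> (M *v x)\<bar> \<le> norm x * norm (M *v x)" by (rule Cauchy_Schwarz_ineq2)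
  also have "\<dots> \<le> norm x * (spec_norm M * norm x)"
    unfolding spec_norm_def by (intro mult_left_mono onorm matrix_vector_mul_bounded_linear) auto
  also have "\<dots> = spec_norm M * (x \<bullet> x)" by (simp add: power2_norm_eq_inner[symmetric] power2_eq_square)
  finally show ?thesis .
qed

lemma spec_norm_nonneg: "0 \<le> spec_norm (M::real^'n^'m)"
  unfolding spec_norm_def by (intro onorm_pos_le matrix_vector_mul_bounded_linear)

lemma spec_norm_le:
  fixes M :: "real^'n^'n"
  assumes sM: "symm_mat M" and c: "0 \<le> c" and h: "\<And>x. \<bar>x \<bullet> (M *v x)\<bar> \<le> c * (x \<bullet> x)"
  shows "spec_norm M \<le> c"
  unfolding spec_norm_def
proof (rule onorm_le)
  fix x :: "real^'n"
  show "norm (M *v x) \<le> c * norm x"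
  proof (cases "M *v x = 0")
    case True then show ?thesis using c by simp
  next
    case False
    hence x0: "x \<noteq> 0" by auto
    define y where "y = (norm x / norm (M *v x)) *\<^sub>R (M *v x)"
    have ny: "y \<bullet> y = x \<bullet> x" using False
      by (simp add: y_def power2_norm_eq_inner[symmetric] power2_eq_square)
    have xy: "x \<bullet> (M *v y) = norm x * norm (M *v x)"
    proof -
      have "x \<bullet> (M *v y) = y \<bullet> (M *v x)" using symm_inner[OF sM] by blast
      also have "\<dots> = (norm x / norm (M *v x)) * ((M *v x) \<bullet> (M *v x))" by (simp add: y_def)
      also have "\<dots> = norm x * norm (M *v x)" using False
        by (simp add: power2_norm_eq_inner[symmetric] power2_eq_square)
      finally show ?thesis .
    qed
    have yx: "y \<bullet> (M *v x) = x \<bullet> (M *v y)" using symm_inner[OF sM] by metis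
    have e1: "(x + y) \<bullet> (M *v (x + y)) - (x - y) \<bullet> (M *v (x - y)) = 4 * (x \<bullet> (M *v y))"
      using yx by (simp add: matrix_vector_right_distrib matrix_vector_mult_diff_rdistrib
          matrix_vector_mult_diff_distrib inner_add_left inner_add_right inner_diff_left inner_diff_right)
    have e2: "(x + y) \<bullet> (M *v (x + y)) - (x - y) \<bullet> (M *v (x - y))
        \<le> c * ((x + y) \<bullet> (x + y)) + c * ((x - y) \<bullet> (x - y))"
      using h[of "x + y"] h[of "x - y"] by linarith
    have e3: "c * ((x + y) \<bullet> (x + y)) + c * ((x - y) \<bullet> (x - y)) = 4 * (c * (x \<bullet> x))"
      using ny by (simp add: inner_add_left inner_add_right inner_diff_left inner_diff_right
          inner_commute[of y x] algebra_simps)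
    have "norm x * norm (M *v x) \<le> c * (x \<bullet> x)" using xy e1 e2 e3 by linarith
    also have "c * (x \<bullet> x) = norm x * (c * norm x)" by (simp add: power2_norm_eq_inner[symmetric] power2_eq_square)
    finally show ?thesis using x0 by simp
  qed
qed


lemma classK_linear:
  assumes "0 < (C::real)"
  shows "class_K (\<lambda>r. C * r)"
  unfolding class_K_def strict_mono_on_def using assms
  by (auto intro!: continuous_intros)

lemma classKL_exp:
  assumes C: "0 < (C::real)" and rho: "0 < \<rho>" "\<rho> < 1"
  shows "class_KL (\<lambda>r i. C * \<rho>^i * r)"
  unfolding class_KL_def
proof (intro conjI allI impI)
  fix i :: nat
  show "class_K (\<lambda>r. C * \<rho> ^ i * r)" using classK_linear[of "C * \<rho>^i"] C rho by simp
next
  fix r :: real assume r: "0 \<le> r"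
  show "antimono (\<lambda>i. C * \<rho> ^ i * r)"
  proof (rule antimonoI)
    fix x y :: nat assume "x \<le> y"
    hence "\<rho>^y \<le> \<rho>^x" using rho by (intro power_decreasing) auto
    then show "C * \<rho> ^ y * r \<le> C * \<rho> ^ x * r" using C r by (intro mult_right_mono) auto
  qed
  have "(\<lambda>i. C * \<rho> ^ i * r) \<longlonglongrightarrow> C * 0 * r"
    using rho by (intro tendsto_intros LIMSEQ_power_zero) auto
  then show "(\<lambda>i. C * \<rho> ^ i * r) \<longlonglongrightarrow> 0" by simp
qed

theorem theorem3:
  fixes A :: "real^'n^'n" and B :: "real^'m^'n" and S :: "real^'n^'n"
    and R :: "real^'m^'m" and Pstar :: "real^'n^'n"
  assumes S: "pd_mat S" and R: "pd_mat R" and AB: "stabilizable A B"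
    and Pstar: "pd_mat Pstar" "Pstar = riccati A B R Pstar S"
  shows "\<exists>\<beta> \<gamma>. class_KL \<beta> \<and> class_K \<gamma> \<and>
    (\<forall>(\<Delta> :: nat \<Rightarrow> real^'n^'n) (P :: nat \<Rightarrow> real^'n^'n).
        (\<forall>i. symm_mat (\<Delta> i)) \<longrightarrow>
        bdd_above (range (\<lambda>i. spec_norm (\<Delta> i))) \<longrightarrow>
        (SUP i. spec_norm (\<Delta> i)) < lambda_min S \<longrightarrow>
        psd_mat (P 0) \<longrightarrow>
        (\<forall>i. P (Suc i) = riccati A B R (P i) S + \<Delta> i) \<longrightarrow>
        (\<forall>i. spec_norm (P i - Pstar)
               \<le> \<beta> (spec_norm (P 0 - Pstar)) i + \<gamma> (SUP i. spec_norm (\<Delta> i))))"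
proof -
  let ?Ps = Pstar
  have sS: "symm_mat S" using S by (simp add: pd_mat_def)
  have sPs: "symm_mat ?Ps" using Pstar(1) by (simp add: pd_mat_def)
  have psdPs: "psd_mat ?Ps" using Pstar(1) unfolding pd_mat_def psd_mat_def
    by (metis inner_zero_left less_eq_real_def matrix_vector_mult_0_right)
  have PsX0: "0 \<le> x \<bullet> (?Ps *v x)" for x using psdPs by (simp add: psd_mat_def)
  define s where "s = lambda_min S"
  have s0: "0 < s" unfolding s_def by (rule lambda_min_pos[OF S])
  have sb: "s * (x \<bullet> x) \<le> x \<bullet> (S *v x)" for x unfolding s_def by (rule lambda_min_bound(1)[OF sS])
  define q where "q = lambda_min ?Ps"
  have q0: "0 < q" unfolding q_def by (rule lambda_min_pos[OF Pstar(1)])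
  have qb: "q * (x \<bullet> x) \<le> x \<bullet> (?Ps *v x)" for x unfolding q_def by (rule lambda_min_bound(1)[OF sPs])
  define p where "p = spec_norm ?Ps + 1"
  have p0: "0 < p" unfolding p_def using spec_norm_nonneg[of ?Ps] by linarith
  have pb: "x \<bullet> (?Ps *v x) \<le> p * (x \<bullet> x)" for x
  proof -
    have "x \<bullet> (?Ps *v x) \<le> spec_norm ?Ps * (x \<bullet> x)" using qf_bound[of x ?Ps] by linarith
    also have "\<dots> \<le> p * (x \<bullet> x)" unfolding p_def by (intro mult_right_mono) auto
    finally show ?thesis .
  qed
  define \<kappa> where "\<kappa> = min (s / p) (1/2)"
  have k0: "0 < \<kappa>" "\<kappa> \<le> 1/2" "\<kappa> \<le> s / p" using s0 p0 unfolding \<kappa>_def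
    by (auto simp del: min_less_iff_conj simp add: min_def)
  define \<rho> where "\<rho> = 1 - \<kappa>"
  have rho: "0 < \<rho>" "\<rho> < 1" using k0 unfolding \<rho>_def by auto
  have Sk: "\<kappa> * (x \<bullet> (?Ps *v x)) \<le> x \<bullet> (S *v x)" for x
  proof -
    have "\<kappa> * (x \<bullet> (?Ps *v x)) \<le> (s / p) * (x \<bullet> (?Ps *v x))"
      using k0 PsX0[of x] by (intro mult_right_mono) auto
    also have "\<dots> \<le> (s / p) * (p * (x \<bullet> x))" using pb[of x] s0 p0 by (intro mult_left_mono) auto
    also have "\<dots> = s * (x \<bullet> x)" using p0 by simp
    finally show ?thesis using sb[of x] by linarith
  qed
  have fixRic: "riccati A B R ?Ps S = ?Ps" using Pstar(2) by (rule sym)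
  have fx: "y \<bullet> (?Ps *v y) = y \<bullet> (riccati A B R ?Ps S *v y)" for y by (simp add: fixRic)
  define \<beta> where "\<beta> = (\<lambda>r i. (p / q) * \<rho>^i * r)"
  define \<gamma> where "\<gamma> = (\<lambda>d. (p / (q * \<kappa>)) * d)"
  have KL: "class_KL \<beta>" unfolding \<beta>_def using p0 q0 rho by (intro classKL_exp) auto
  have K: "class_K \<gamma>" unfolding \<gamma>_def using p0 q0 k0 by (intro classK_linear) auto
  have main: "spec_norm (P i - ?Ps) \<le> \<beta> (spec_norm (P 0 - ?Ps)) i + \<gamma> (SUP i. spec_norm (\<Delta> i))"
    if sD: "\<forall>i. symm_mat (\<Delta> i)" and bdd: "bdd_above (range (\<lambda>i. spec_norm (\<Delta> i)))"
      and dlt: "(SUP i. spec_norm (\<Delta> i)) < lambda_min S" and P0: "psd_mat (P 0)"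
      and rec: "\<forall>i. P (Suc i) = riccati A B R (P i) S + \<Delta> i"
    for \<Delta> P :: "nat \<Rightarrow> real^'n^'n" and i
  proof -
    define d where "d = (SUP i. spec_norm (\<Delta> i))"
    have Dd: "spec_norm (\<Delta> j) \<le> d" for j unfolding d_def using cSUP_upper[of j UNIV "\<lambda>i. spec_norm (\<Delta> i)"] bdd by simp
    have d0: "0 \<le> d" using Dd[of 0] spec_norm_nonneg[of "\<Delta> 0"] by linarith
    have ds: "d < s" using dlt unfolding d_def s_def .
    define r where "r = spec_norm (P 0 - ?Ps)"
    have r0: "0 \<le> r" unfolding r_def by (rule spec_norm_nonneg)
    define a where "a j = \<rho>^j * r / q + d / (q * \<kappa>)" for j
    have a0: "0 \<le> a j" for j unfolding a_def using rho r0 q0 d0 k0 by auto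
    have aSuc: "a (Suc j) = \<rho> * a j + d / q" for j
      unfolding a_def \<rho>_def using k0 q0 by (simp add: field_simps)
    have Dx: "\<bar>x \<bullet> (\<Delta> j *v x)\<bar> \<le> (d / q) * (x \<bullet> (?Ps *v x))" for j x
    proof -
      have "\<bar>x \<bullet> (\<Delta> j *v x)\<bar> \<le> spec_norm (\<Delta> j) * (x \<bullet> x)" by (rule qf_bound)
      also have "\<dots> \<le> d * (x \<bullet> x)" using Dd[of j] by (intro mult_right_mono) auto
      also have "\<dots> = (d / q) * (q * (x \<bullet> x))" using q0 by simp
      also have "\<dots> \<le> (d / q) * (x \<bullet> (?Ps *v x))" using qb[of x] d0 q0 by (intro mult_left_mono) auto
      finally show ?thesis .
    qed
    have Dxx: "\<bar>x \<bullet> (\<Delta> j *v x)\<bar> \<le> d * (x \<bullet> x)" for j x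
      using qf_bound[of x "\<Delta> j"] Dd[of j] mult_right_mono[of "spec_norm (\<Delta> j)" d "x \<bullet> x"] by simp
    have inv: "psd_mat (P j) \<and> (\<forall>x. (1 - a j) * (x \<bullet> (?Ps *v x)) \<le> x \<bullet> (P j *v x)
                                 \<and> x \<bullet> (P j *v x) \<le> (1 + a j) * (x \<bullet> (?Ps *v x)))" for j
    proof (induction j)
      case 0
      have "(1 - a 0) * (x \<bullet> (?Ps *v x)) \<le> x \<bullet> (P 0 *v x) \<and> x \<bullet> (P 0 *v x) \<le> (1 + a 0) * (x \<bullet> (?Ps *v x))" for x
      proof -
        have e: "x \<bullet> (P 0 *v x) = x \<bullet> (?Ps *v x) + x \<bullet> ((P 0 - ?Ps) *v x)"
          by (simp add: matrix_vector_mult_diff_rdistrib inner_diff_right)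
        have "\<bar>x \<bullet> ((P 0 - ?Ps) *v x)\<bar> \<le> r * (x \<bullet> x)" unfolding r_def by (rule qf_bound)
        also have "\<dots> = (r / q) * (q * (x \<bullet> x))" using q0 by simp
        also have "\<dots> \<le> (r / q) * (x \<bullet> (?Ps *v x))" using qb[of x] r0 q0 by (intro mult_left_mono) auto
        also have "\<dots> \<le> a 0 * (x \<bullet> (?Ps *v x))" unfolding a_def using PsX0[of x] d0 q0 k0
          by (intro mult_right_mono) auto
        finally have "\<bar>x \<bullet> ((P 0 - ?Ps) *v x)\<bar> \<le> a 0 * (x \<bullet> (?Ps *v x))" .
        moreover have "(1 - a 0) * (x \<bullet> (?Ps *v x)) = x \<bullet> (?Ps *v x) - a 0 * (x \<bullet> (?Ps *v x))"
          "(1 + a 0) * (x \<bullet> (?Ps *v x)) = x \<bullet> (?Ps *v x) + a 0 * (x \<bullet> (?Ps *v x))"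
          by (simp_all add: left_diff_distrib distrib_right)
        ultimately show ?thesis using e by (simp only: abs_le_iff) linarith
      qed
      then show ?case using P0 by blast
    next
      case (Suc j)
      have Pj: "psd_mat (P j)" using Suc by blast
      have lo: "\<And>x. (1 - a j) * (x \<bullet> (?Ps *v x)) \<le> x \<bullet> (P j *v x)"
        and hi: "\<And>x. x \<bullet> (P j *v x) \<le> (1 + a j) * (x \<bullet> (?Ps *v x))" using Suc by blast+
      have PjX0: "0 \<le> y \<bullet> (P j *v y)" for y using Pj by (simp add: psd_mat_def)
      have ePS: "x \<bullet> (P (Suc j) *v x) = x \<bullet> (riccati A B R (P j) S *v x) + x \<bullet> (\<Delta> j *v x)" for x
        using rec by (simp add: matrix_vector_mult_add_rdistrib inner_add_right)
      have symm: "symm_mat (P (Suc j))"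
        using riccati_symm[OF R Pj sS, of A B] sD rec
        by (simp add: symm_mat_def transpose_add)
      have RS: "x \<bullet> (S *v x) \<le> x \<bullet> (riccati A B R (P j) S *v x)" for x
        using riccati_lower[OF R Pj psdPs fx, of 0 x] PjX0 by simp
      have psd: "psd_mat (P (Suc j))"
        unfolding psd_mat_def
      proof (intro conjI allI symm)
        fix x :: "real^'n"
        have "0 \<le> (s - d) * (x \<bullet> x)" using ds by simp
        moreover have "(s - d) * (x \<bullet> x) = s * (x \<bullet> x) - d * (x \<bullet> x)" by (simp add: left_diff_distrib)
        ultimately show "0 \<le> x \<bullet> (P (Suc j) *v x)" using ePS[of x] RS[of x] sb[of x] Dxx[where j=j and x=x]
          by (simp only: abs_le_iff) linarith
      qed
      have bnds: "(1 - a (Suc j)) * (x \<bullet> (?Ps *v x)) \<le> x \<bullet> (P (Suc j) *v x)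
              \<and> x \<bullet> (P (Suc j) *v x) \<le> (1 + a (Suc j)) * (x \<bullet> (?Ps *v x))" for x
      proof -
        define X where "X = x \<bullet> (?Ps *v x)"
        have X0: "0 \<le> X" unfolding X_def by (rule PsX0)
        define c where "c = max 0 (1 - a j)"
        have c: "0 \<le> c" "c \<le> 1" using a0[of j] unfolding c_def by auto
        have cle: "c * (y \<bullet> (?Ps *v y)) \<le> y \<bullet> (P j *v y)" for y
          using lo[of y] PjX0[of y] unfolding c_def by (cases "0 \<le> 1 - a j") (auto simp: max_def)
        have L1: "c * X + (1 - c) * (x \<bullet> (S *v x)) \<le> x \<bullet> (riccati A B R (P j) S *v x)"
          unfolding X_def by (rule riccati_lower[OF R Pj psdPs fx c cle])
        have L2: "(1 - c) * (\<kappa> * X) \<le> (1 - c) * (x \<bullet> (S *v x))"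
          unfolding X_def using c Sk[of x] by (intro mult_left_mono) auto
        have L3: "(1 - \<rho> * a j) * X \<le> (c + (1 - c) * \<kappa>) * X"
        proof (rule mult_right_mono[OF _ X0])
          have "1 - a j \<le> c" unfolding c_def by simp
          hence "\<rho> * (1 - a j) \<le> \<rho> * c" using rho by (intro mult_left_mono) auto
          moreover have "c + (1 - c) * \<kappa> = \<kappa> + \<rho> * c" by (simp add: \<rho>_def algebra_simps)
          moreover have "\<rho> * (1 - a j) = \<rho> - \<rho> * a j" by (simp add: right_diff_distrib)
          moreover have "\<kappa> + \<rho> = 1" by (simp add: \<rho>_def)
          ultimately show "1 - \<rho> * a j \<le> c + (1 - c) * \<kappa>" by linarith
        qed
        have U1: "x \<bullet> (riccati A B R (P j) S *v x) \<le> (1 + a j) * X - a j * (x \<bullet> (S *v x))"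
          unfolding X_def by (rule riccati_upper[OF R Pj psdPs fx a0 hi])
        have U2: "a j * (\<kappa> * X) \<le> a j * (x \<bullet> (S *v x))"
          unfolding X_def using a0[of j] Sk[of x] by (intro mult_left_mono) auto
        have D: "\<bar>x \<bullet> (\<Delta> j *v x)\<bar> \<le> (d / q) * X" unfolding X_def by (rule Dx)
        have A1: "(1 - a (Suc j)) * X = (1 - \<rho> * a j) * X - (d / q) * X"
          and A2: "(1 + a (Suc j)) * X = (1 + a j) * X - a j * (\<kappa> * X) + (d / q) * X"
          unfolding aSuc \<rho>_def by (simp_all add: algebra_simps)
        have A3: "(c + (1 - c) * \<kappa>) * X = c * X + (1 - c) * (\<kappa> * X)" by (simp add: algebra_simps)
        show ?thesis
          using ePS[of x] L1 L2 L3 U1 U2 D A1 A2 A3 unfolding X_def[symmetric]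
          by (simp only: abs_le_iff) linarith
      qed
      show ?case using psd bnds by blast
    qed
    have Pi: "psd_mat (P i)" using inv by blast
    have symmE: "symm_mat (P i - ?Ps)" using Pi sPs by (simp add: psd_mat_def symm_mat_def transpose_diff)
    have "spec_norm (P i - ?Ps) \<le> p * a i"
    proof (rule spec_norm_le[OF symmE])
      show "0 \<le> p * a i" using p0 a0[of i] by simp
      fix x
      have "\<bar>x \<bullet> ((P i - ?Ps) *v x)\<bar> \<le> a i * (x \<bullet> (?Ps *v x))"
      proof -
        have "x \<bullet> ((P i - ?Ps) *v x) = x \<bullet> (P i *v x) - x \<bullet> (?Ps *v x)"
          by (simp add: matrix_vector_mult_diff_rdistrib inner_diff_right)
        moreover have "(1 - a i) * (x \<bullet> (?Ps *v x)) = x \<bullet> (?Ps *v x) - a i * (x \<bullet> (?Ps *v x))"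
          "(1 + a i) * (x \<bullet> (?Ps *v x)) = x \<bullet> (?Ps *v x) + a i * (x \<bullet> (?Ps *v x))"
          by (simp_all add: left_diff_distrib distrib_right)
        moreover have "(1 - a i) * (x \<bullet> (?Ps *v x)) \<le> x \<bullet> (P i *v x) \<and> x \<bullet> (P i *v x) \<le> (1 + a i) * (x \<bullet> (?Ps *v x))"
          using inv[of i] by blast
        ultimately show ?thesis by (simp only: abs_le_iff) linarith
      qed
      also have "\<dots> \<le> a i * (p * (x \<bullet> x))" using pb[of x] a0[of i] by (intro mult_left_mono) auto
      finally show "\<bar>x \<bullet> ((P i - ?Ps) *v x)\<bar> \<le> p * a i * (x \<bullet> x)" by (simp add: algebra_simps)
    qed
    also have "p * a i = \<beta> r i + \<gamma> d"
      unfolding a_def \<beta>_def \<gamma>_def using q0 k0 by (simp add: field_simps)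
    finally show ?thesis unfolding r_def d_def .
  qed
  show ?thesis
    apply (rule exI[of _ \<beta>], rule exI[of _ \<gamma>])
    using KL K main by blast
qed

end
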